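(* Let $A'B'C'D'$ be a tangential quadrilateral in the $uv$-plane, lying in the upper half-plane $v>0$, such that the lines $A'B'$ and $C'D'$ meet at $O=(0,0)$ and the lines $B'C'$ and $D'A'$ meet at $P=(1,0)$, where $O$ lies on ray $A'B'$ beyond $B'$ and on ray $D'C'$ beyond $C'$, and $P$ lies on ray $A'D'$ beyond $D'$ and on ray $B'C'$ beyond $C'$ (so that $\angle A'+\angle B'<\pi$ and $\angle A'+\angle D'<\pi$). Then for every $a>1$ there exist real numbers $x,y,l$ with $x+y>0$ and $l>0$ such that, with $T$ the map defined below (for this $a$), $$T(x,y)=A',\quad T(x+l,y)=B',\quad T(x+l,y+l)=C',\quad T(x,y+l)=D'.$$
   Context: For fixed $a>1$, $T$ is the map defined on $\{(x,y):x+y\neq0\}$ by $T(x,y)=(f(x,y),g(x,y))$ with $$f(x,y)=\frac{a^x(a^{2y}-1)}{(a^x+a^y)(a^{x+y}-1)},\qquad g(x,y)=\frac{2a^{x+y}}{(a^x+a^y)(a^{x+y}-1)}.$$ A quadrilateral is tangential if it admits an inscribed circle tangent to all four sides; equivalently, the sums of the lengths of the two pairs of opposite sides are equal. Every tangential quadrilateral with no pair of parallel sides can be brought into the position described (lines of opposite sides meeting at $O$ and $P$ as specified, in the upper half-plane) by a similarity and a suitable labelling of its vertices. *)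

theory Defs
  imports "HOL-Analysis.Analysis"
begin

text \<open>Points of the uv-plane are pairs (u,v) :: real \<times> real; the HOL-Analysis norm on
  pairs is the Euclidean one.\<close>

definition Tf :: "real \<Rightarrow> real \<Rightarrow> real \<Rightarrow> real" where
  "Tf a x y = (a powr x * (a powr (2*y) - 1)) / ((a powr x + a powr y) * (a powr (x+y) - 1))"

definition Tg :: "real \<Rightarrow> real \<Rightarrow> real \<Rightarrow> real" where
  "Tg a x y = (2 * a powr (x+y)) / ((a powr x + a powr y) * (a powr (x+y) - 1))"

definition T :: "real \<Rightarrow> real \<Rightarrow> real \<Rightarrow> real \<times> real" where
  "T a x y = (Tf a x y, Tg a x y)"

definition tangential_quad :: "real \<times> real \<Rightarrow> real \<times> real \<Rightarrow> real \<times> real \<Rightarrow> real \<times> real \<Rightarrow> bool" where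
  "tangential_quad A B C D \<longleftrightarrow> dist A B + dist C D = dist B C + dist D A"

definition beyond :: "real \<times> real \<Rightarrow> real \<times> real \<Rightarrow> real \<times> real \<Rightarrow> bool" where
  "beyond X Y Q \<longleftrightarrow> (\<exists>t>1. Q = X + t *\<^sub>R (Y - X))"

end

theory Submission
  imports Defs
begin

definition G :: "real \<Rightarrow> real \<Rightarrow> real \<times> real" where
  "G p q = (p*(q^2-1)/((p+q)*(p*q-1)), 2*p*q/((p+q)*(p*q-1)))"

definition NO :: "real \<Rightarrow> real \<Rightarrow> real" where
  "NO p q = p*(q^2+1)/((p+q)*(p*q-1))"
definition NP :: "real \<Rightarrow> real \<Rightarrow> real" where
  "NP p q = q*(p^2+1)/((p+q)*(p*q-1))"
definition EE :: "real \<Rightarrow> real \<Rightarrow> real" where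
  "EE p q = (p*q+1)/(p*q-1)"
definition FF :: "real \<Rightarrow> real \<Rightarrow> real" where
  "FF p q = (q-p)/(q+p)"

lemma NO_EF: assumes "p>0" "q>0" "p*q>1" shows "NO p q = (EE p q + FF p q)/2"
proof -
  have "p*q-1 \<noteq> 0" "p+q \<noteq> 0" using assms by auto
  hence "EE p q + FF p q = ((p*q+1)*(q+p) + (q-p)*(p*q-1)) / ((p*q-1)*(q+p))"
    unfolding EE_def FF_def by (simp add: add_frac_eq add.commute)
  also have "\<dots> = 2*(p*(q^2+1)) / ((p+q)*(p*q-1))"
    by (simp add: algebra_simps power2_eq_square)
  finally show ?thesis unfolding NO_def by simp
qed

lemma NP_EF: assumes "p>0" "q>0" "p*q>1" shows "NP p q = (EE p q - FF p q)/2"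
proof -
  have "p*q-1 \<noteq> 0" "p+q \<noteq> 0" using assms by auto
  hence "EE p q - FF p q = ((p*q+1)*(q+p) - (q-p)*(p*q-1)) / ((p*q-1)*(q+p))"
    unfolding EE_def FF_def by (simp add: diff_frac_eq add.commute)
  also have "\<dots> = 2*(q*(p^2+1)) / ((p+q)*(p*q-1))"
    by (simp add: algebra_simps power2_eq_square)
  finally show ?thesis unfolding NP_def by simp
qed

lemma key:
  assumes "P1>0" "P2>0" "Q1>0" "Q2>0" "P1*Q1>1" "P2*Q1>1" "P1*Q2>1" "P2*Q2>1"
    and eq: "NO P1 Q1 - NO P2 Q1 + NO P1 Q2 - NO P2 Q2 = NP P2 Q1 - NP P2 Q2 + NP P1 Q1 - NP P1 Q2"
  shows "P2*Q1 = P1*Q2"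
proof -
  have e: "FF P1 Q1 - FF P2 Q2 + (EE P1 Q2 - EE P2 Q1) = 0"
    using eq assms by (simp add: NO_EF NP_EF field_simps)
  have f: "FF P1 Q1 - FF P2 Q2 = 2*(P2*Q1 - P1*Q2)/((Q1+P1)*(Q2+P2))"
    using assms unfolding FF_def by (simp add: diff_frac_eq) (simp add: algebra_simps)
  have g: "EE P1 Q2 - EE P2 Q1 = 2*(P2*Q1 - P1*Q2)/((P1*Q2-1)*(P2*Q1-1))"
    using assms unfolding EE_def by (simp add: diff_frac_eq) (simp add: algebra_simps)
  have "(P2*Q1 - P1*Q2) * (2/((Q1+P1)*(Q2+P2)) + 2/((P1*Q2-1)*(P2*Q1-1))) = 0"
    using e f g by (simp add: algebra_simps)
  moreover have "2/((Q1+P1)*(Q2+P2)) + 2/((P1*Q2-1)*(P2*Q1-1)) > 0"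
    using assms by (intro add_pos_pos divide_pos_pos mult_pos_pos) auto
  ultimately show ?thesis by simp
qed

lemma sqrt_gt_abs: assumes "v>0" shows "sqrt (u^2+v^2) > \<bar>u\<bar>"
proof -
  have "sqrt(u^2) < sqrt(u^2+v^2)" using assms by (intro real_sqrt_less_mono) simp
  thus ?thesis by simp
qed

lemma inv_lemma:
  fixes u v :: real assumes v: "v>0"
  and r_def: "r = sqrt(u^2+v^2)" and rh_def: "rh = sqrt((1-u)^2+v^2)"
    and q_def: "q = (r+u)/v" and p_def: "p = (rh+(1-u))/v"
  shows "p>0" "q>0" "p*q>1" "G p q = (u,v)" "r = NO p q" "rh = NP p q"
     "v * (p^2-1) = 2*p*(1-u)"
proof -
  have r2: "r^2 = u^2+v^2" by (simp add: r_def)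
  have p2: "rh^2 = (1-u)^2+v^2" by (simp add: rh_def)
  have ru: "r > \<bar>u\<bar>" unfolding r_def using sqrt_gt_abs[OF v] .
  have pu: "rh > \<bar>1-u\<bar>" unfolding rh_def using sqrt_gt_abs[OF v] .
  have qpos: "q>0" unfolding q_def using ru v by (intro divide_pos_pos) auto
  have ppos: "p>0" unfolding p_def using pu v by (intro divide_pos_pos) auto
  have qv: "q* v = r+u" using v by (simp add: q_def)
  have pv: "p* v = rh+(1-u)" using v by (simp add: p_def)
  have vne: "v \<noteq> 0" using v by simp
  have "v * (v * (q^2-1)) = v * (2*u*q)"
  proof -
    have "v * (v * (q^2-1)) = (q* v)^2 - v^2" by (simp add: algebra_simps power2_eq_square)
    also have "\<dots> = (r+u)^2 - v^2" by (simp add: qv)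
    also have "\<dots> = 2*u*(r+u)" using r2 by (simp add: algebra_simps power2_eq_square)
    also have "\<dots> = 2*u*(q * v)" by (simp add: qv)
    also have "\<dots> = v * (2*u*q)" by (simp add: algebra_simps)
    finally show ?thesis .
  qed
  hence relq: "v * (q^2-1) = 2*u*q" using vne by simp
  have "v * (v * (q^2+1)) = v * (2*r*q)"
  proof -
    have "v * (v * (q^2+1)) = (q* v)^2 + v^2" by (simp add: algebra_simps power2_eq_square)
    also have "\<dots> = (r+u)^2 + v^2" by (simp add: qv)
    also have "\<dots> = 2*r*(r+u)" using r2 by (simp add: algebra_simps power2_eq_square)
    also have "\<dots> = 2*r*(q * v)" by (simp add: qv)
    also have "\<dots> = v * (2*r*q)" by (simp add: algebra_simps)
    finally show ?thesis .
  qed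
  hence relq2: "v * (q^2+1) = 2*r*q" using vne by simp
  have "v * (v * (p^2-1)) = v * (2*p*(1-u))"
  proof -
    have "v * (v * (p^2-1)) = (p* v)^2 - v^2" by (simp add: algebra_simps power2_eq_square)
    also have "\<dots> = (rh+(1-u))^2 - v^2" by (simp add: pv)
    also have "\<dots> = 2*(1-u)*(rh+(1-u))" using p2 by (simp add: algebra_simps power2_eq_square)
    also have "\<dots> = 2*(1-u)*(p * v)" by (simp add: pv)
    also have "\<dots> = v * (2*p*(1-u))" by (simp add: algebra_simps)
    finally show ?thesis .
  qed
  hence relp: "v * (p^2-1) = 2*p*(1-u)" using vne by simp
  have "v * (v * (p^2+1)) = v * (2*rh*p)"
  proof -
    have "v * (v * (p^2+1)) = (p* v)^2 + v^2" by (simp add: algebra_simps power2_eq_square)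
    also have "\<dots> = (rh+(1-u))^2 + v^2" by (simp add: pv)
    also have "\<dots> = 2*rh*(rh+(1-u))" using p2 by (simp add: algebra_simps power2_eq_square)
    also have "\<dots> = 2*rh*(p * v)" by (simp add: pv)
    also have "\<dots> = v * (2*rh*p)" by (simp add: algebra_simps)
    finally show ?thesis .
  qed
  hence relp2: "v * (p^2+1) = 2*rh*p" using vne by simp
  have "r < rh + 1"
  proof -
    have "r^2 < (rh+1)^2" using r2 p2 pu by (simp add: algebra_simps power2_eq_square)
    moreover have "rh + 1 \<ge> 0" using pu by linarith
    ultimately show ?thesis using power2_less_imp_less by blast
  qed
  hence "(r-u)*(r+u) < (rh+(1-u))*(r+u)" using ru by (intro mult_strict_right_mono) auto
  also have "(r-u)*(r+u) = v * v" using r2 by (simp add: algebra_simps power2_eq_square)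
  also have "(rh+(1-u))*(r+u) = (p * v)*(q * v)" by (simp add: pv qv)
  also have "(p * v)*(q * v) = (p*q)*(v * v)" by (simp add: algebra_simps)
  finally have pq: "p*q > 1" using v by simp
  define D where "D = (p+q)*(p*q-1)"
  have Dpos: "D > 0" unfolding D_def using ppos qpos pq by simp
  have vD: "v * D = 2*p*q"
  proof -
    have "v * D = q*(v * (p^2-1)) + p*(v * (q^2-1))" unfolding D_def by (simp add: algebra_simps power2_eq_square)
    also have "\<dots> = 2*p*q" by (simp only: relp relq) (simp add: algebra_simps)
    finally show ?thesis .
  qed
  have g1: "p*(q^2-1)/D = u"
  proof -
    have "v * (p*(q^2-1)) = v * (u*D)" using relq vD by (simp add: algebra_simps)
    hence "p*(q^2-1) = u*D" using vne by simp
    thus ?thesis using Dpos by simp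
  qed
  have g2: "2*p*q/D = v" using vD Dpos by (simp add: field_simps)
  have n1: "NO p q = r"
  proof -
    have "v * (p*(q^2+1)) = p*(v * (q^2+1))" by (simp add: algebra_simps)
    also have "\<dots> = r*(2*p*q)" unfolding relq2 by (simp add: algebra_simps)
    also have "\<dots> = v * (r*D)" unfolding vD[symmetric] by (simp add: algebra_simps)
    finally have "v * (p*(q^2+1)) = v * (r*D)" .
    hence "p*(q^2+1) = r*D" using vne by simp
    thus ?thesis using Dpos unfolding NO_def D_def[symmetric] by simp
  qed
  have n2: "NP p q = rh"
  proof -
    have "v * (q*(p^2+1)) = q*(v * (p^2+1))" by (simp add: algebra_simps)
    also have "\<dots> = rh*(2*p*q)" unfolding relp2 by (simp add: algebra_simps)
    also have "\<dots> = v * (rh*D)" unfolding vD[symmetric] by (simp add: algebra_simps)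
    finally have "v * (q*(p^2+1)) = v * (rh*D)" .
    hence "q*(p^2+1) = rh*D" using vne by simp
    thus ?thesis using Dpos unfolding NP_def D_def[symmetric] by simp
  qed
  show "p>0" "q>0" "p*q>1" "r = NO p q" "rh = NP p q" "v * (p^2-1) = 2*p*(1-u)"
    using ppos qpos pq n1 n2 relp by auto
  show "G p q = (u,v)" using g1 g2 unfolding G_def D_def[symmetric] by simp
qed

definition qf :: "real \<Rightarrow> real \<Rightarrow> real" where "qf u v = (sqrt(u^2+v^2)+u)/v"
definition pf :: "real \<Rightarrow> real \<Rightarrow> real" where "pf u v = (sqrt((1-u)^2+v^2)+(1-u))/v"

lemmas inv2 = inv_lemma[OF _ refl refl qf_def pf_def]

lemma T_G: assumes "a>0" shows "T a x y = G (a powr x) (a powr y)"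
proof -
  have "a powr (2* y) = (a powr y)^2"
    by (simp add: power2_eq_square powr_add[symmetric])
  thus ?thesis unfolding T_def Tf_def Tg_def G_def by (simp add: powr_add)
qed

lemma beyond_O:
  assumes "beyond (u,v) (u',v') (0,0)"
  shows "\<exists>lam. 0<lam \<and> lam<1 \<and> u' = lam* u \<and> v' = lam* v"
proof -
  obtain t where t: "t>1" "(0,0) = (u,v) + t *\<^sub>R ((u',v') - (u,v))"
    using assms unfolding beyond_def by blast
  hence e: "0 = u + t* (u'-u)" "0 = v + t* (v'-v)" by auto
  show ?thesis
  proof (intro exI conjI)
    show "0 < (t-1)/t" "(t-1)/t < 1" using t by auto
    show "u' = (t-1)/t* u" "v' = (t-1)/t* v" using e t by (auto simp: field_simps)
  qed
qed

lemma beyond_P: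
  assumes "beyond (u,v) (u',v') (1,0)"
  shows "\<exists>mu. 0<mu \<and> mu<1 \<and> u' = 1-mu+mu* u \<and> v' = mu* v"
proof -
  obtain t where t: "t>1" "(1,0) = (u,v) + t *\<^sub>R ((u',v') - (u,v))"
    using assms unfolding beyond_def by blast
  hence e: "1 = u + t* (u'-u)" "0 = v + t* (v'-v)" by auto
  show ?thesis
  proof (intro exI conjI)
    show "0 < (t-1)/t" "(t-1)/t < 1" using t by auto
    show "u' = 1-(t-1)/t+(t-1)/t* u" "v' = (t-1)/t* v" using e t by (auto simp: field_simps)
  qed
qed

lemma sqrt_scale: assumes "lam \<ge> 0" shows "sqrt((lam* u)^2+(lam* v)^2) = lam * sqrt(u^2+v^2)"
proof -
  have "(lam* u)^2+(lam* v)^2 = lam^2* (u^2+v^2)" by (simp add: algebra_simps power2_eq_square)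
  thus ?thesis using assms by (simp add: real_sqrt_mult)
qed

lemma qf_scale: assumes "lam>0" shows "qf (lam* u) (lam* v) = qf u v"
proof -
  define S where "S = sqrt(u^2+v^2)"
  have "qf (lam* u) (lam* v) = (lam * S + lam * u)/(lam * v)"
    unfolding qf_def sqrt_scale[OF less_imp_le[OF assms]] S_def ..
  also have "\<dots> = (lam * (S + u))/(lam * v)" by (simp add: algebra_simps)
  also have "\<dots> = (S+u)/v" using assms by simp
  finally show ?thesis unfolding qf_def S_def .
qed

lemma sqrtP: assumes "mu \<ge> 0" shows "sqrt((1-(1-mu+mu* u))^2+(mu* v)^2) = mu * sqrt((1-u)^2+v^2)"
proof -
  have "1-(1-mu+mu* u) = mu* (1-u)" by (simp add: algebra_simps)
  thus ?thesis using sqrt_scale[OF assms] by simp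
qed

lemma pf_scale: assumes "mu>0" shows "pf (1-mu+mu* u) (mu* v) = pf u v"
proof -
  define S where "S = sqrt((1-u)^2+v^2)"
  have "pf (1-mu+mu* u) (mu* v) = (mu * S + (1-(1-mu+mu* u)))/(mu * v)"
    unfolding pf_def sqrtP[OF less_imp_le[OF assms]] S_def ..
  also have "\<dots> = (mu * (S + (1-u)))/(mu * v)" by (simp add: algebra_simps)
  also have "\<dots> = (S+(1-u))/v" using assms by simp
  finally show ?thesis unfolding pf_def S_def .
qed

lemma dist_O: assumes "0 \<le> lam" "lam \<le> 1"
  shows "dist (u,v) (lam* u, lam* v) = sqrt(u^2+v^2) - sqrt((lam* u)^2+(lam* v)^2)"
proof -
  have "dist (u,v) (lam* u, lam* v) = sqrt(((1-lam)* u)^2+((1-lam)* v)^2)"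
    by (simp add: dist_Pair_Pair dist_real_def algebra_simps)
  also have "\<dots> = (1-lam)* sqrt(u^2+v^2)" using assms by (simp add: sqrt_scale)
  finally show ?thesis unfolding sqrt_scale[OF assms(1)] by (simp add: algebra_simps)
qed

lemma dist_P: assumes "0 \<le> mu" "mu \<le> 1"
  shows "dist (u,v) (1-mu+mu* u, mu* v) = sqrt((1-u)^2+v^2) - sqrt((1-(1-mu+mu* u))^2+(mu* v)^2)"
proof -
  have "dist (u,v) (1-mu+mu* u, mu* v) = sqrt(((1-mu)* (1-u))^2+((1-mu)* v)^2)"
    by (simp add: dist_Pair_Pair dist_real_def algebra_simps power2_eq_square)
  also have "\<dots> = (1-mu)* sqrt((1-u)^2+v^2)" using assms by (simp add: sqrt_scale)
  finally show ?thesis unfolding sqrtP[OF assms(1)] by (simp add: algebra_simps)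
qed

lemma pf_mono: assumes "v>0" "0<lam" "lam<1" shows "pf u v < pf (lam* u) (lam* v)"
proof (rule ccontr)
  assume "\<not> ?thesis"
  hence le: "pf (lam* u) (lam* v) \<le> pf u v" by simp
  have v2: "lam* v > 0" using assms by simp
  have p1: "pf u v > 0" "v * ((pf u v)^2-1) = 2* pf u v * (1-u)" using inv2[OF assms(1)] by auto
  have p2: "pf (lam* u) (lam* v) > 0" "(lam* v) * ((pf (lam* u) (lam* v))^2-1) = 2* pf (lam* u) (lam* v)* (1-lam* u)"
    using inv2[OF v2] by auto
  define P where "P = pf u v"
  define Q where "Q = pf (lam* u) (lam* v)"
  have e1: "P - 1/P = 2* (1-u)/v" using p1 assms unfolding P_def[symmetric]
    by (simp add: field_simps power2_eq_square; simp add: algebra_simps)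
  have e2: "Q - 1/Q = 2* (1-lam* u)/(lam* v)" using p2 assms v2 unfolding Q_def[symmetric]
    by (simp add: field_simps power2_eq_square; simp add: algebra_simps)
  have "1/P \<le> 1/Q" using le p1 p2 unfolding P_def[symmetric] Q_def[symmetric]
    by (simp add: frac_le)
  hence "Q - 1/Q \<le> P - 1/P" using le unfolding P_def[symmetric] Q_def[symmetric] by simp
  hence "2* (1-lam* u)/(lam* v) \<le> 2* (1-u)/v" using e1 e2 by simp
  moreover have "2* (1-lam* u)/(lam* v) - 2* (1-u)/v = 2* (1-lam)/(lam* v)"
    using assms by (simp add: field_simps)
  moreover have "2* (1-lam)/(lam* v) > 0" using assms by simp
  ultimately show False by simp
qed


theorem theorem6p2:
  fixes A B C D :: "real \<times> real" and a :: real
  assumes tang: "tangential_quad A B C D"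
    and upper: "snd A > 0" "snd B > 0" "snd C > 0" "snd D > 0"
    and O1: "beyond A B (0,0)" and O2: "beyond D C (0,0)"
    and P1: "beyond A D (1,0)" and P2: "beyond B C (1,0)"
    and a: "a > 1"
  shows "\<exists>x y l. x + y > 0 \<and> l > 0 \<and> T a x y = A \<and> T a (x+l) y = B
                 \<and> T a (x+l) (y+l) = C \<and> T a x (y+l) = D"
proof -
  obtain a1 a2 where A: "A = (a1,a2)" by (cases A)
  obtain b1 b2 where B: "B = (b1,b2)" by (cases B)
  obtain c1 c2 where C: "C = (c1,c2)" by (cases C)
  obtain d1 d2 where D: "D = (d1,d2)" by (cases D)
  have a2: "a2>0" and b2: "b2>0" and c2: "c2>0" and d2: "d2>0" using upper A B C D by auto
  obtain lB where lB: "0<lB" "lB<1" "b1 = lB* a1" "b2 = lB* a2"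
    using beyond_O[of a1 a2 b1 b2] O1 A B by auto
  obtain lC where lC: "0<lC" "lC<1" "c1 = lC* d1" "c2 = lC* d2"
    using beyond_O[of d1 d2 c1 c2] O2 C D by auto
  obtain mD where mD: "0<mD" "mD<1" "d1 = 1-mD+mD* a1" "d2 = mD* a2"
    using beyond_P[of a1 a2 d1 d2] P1 A D by auto
  obtain mC where mC: "0<mC" "mC<1" "c1 = 1-mC+mC* b1" "c2 = mC* b2"
    using beyond_P[of b1 b2 c1 c2] P2 B C by auto
  define pA where "pA = pf a1 a2"
  define qA where "qA = qf a1 a2"
  define pB where "pB = pf b1 b2"
  define qB where "qB = qf b1 b2"
  define pC where "pC = pf c1 c2"
  define qC where "qC = qf c1 c2"
  define pD where "pD = pf d1 d2"
  define qD where "qD = qf d1 d2"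
  note iA = inv2[where u=a1, OF a2, folded pA_def qA_def]
  note iB = inv2[where u=b1, OF b2, folded pB_def qB_def]
  note iC = inv2[where u=c1, OF c2, folded pC_def qC_def]
  note iD = inv2[where u=d1, OF d2, folded pD_def qD_def]
  have qB: "qB = qA" unfolding qB_def qA_def lB using qf_scale lB by simp
  have qC: "qC = qD" unfolding qC_def qD_def lC using qf_scale lC by simp
  have pD: "pD = pA" unfolding pD_def pA_def mD using pf_scale mD by simp
  have pC: "pC = pB" unfolding pC_def pB_def mC using pf_scale mC by simp
  have pBA: "pA < pB" unfolding pA_def pB_def lB using pf_mono[OF a2 lB(1,2)] .
  have dAB: "dist A B = NO pA qA - NO pB qA"
    using dist_O[of lB a1 a2] lB iA iB qB A B by (simp add: pA_def qA_def pB_def qB_def)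
  have dCD: "dist C D = NO pA qD - NO pB qD"
    using dist_O[of lC d1 d2] lC iC iD qC pC pD C D by (simp add: dist_commute pA_def pD_def qD_def pB_def pC_def qC_def)
  have dBC: "dist B C = NP pB qA - NP pB qD"
    using dist_P[of mC b1 b2] mC iB iC qB qC pC B C by (simp add: pA_def qA_def pB_def qB_def pC_def qC_def qD_def)
  have dDA: "dist D A = NP pA qA - NP pA qD"
    using dist_P[of mD a1 a2] mD iA iD pD A D by (simp add: dist_commute pA_def qA_def pD_def qD_def)
  have eq: "NO pA qA - NO pB qA + NO pA qD - NO pB qD = NP pB qA - NP pB qD + NP pA qA - NP pA qD"
    using tang unfolding tangential_quad_def dAB dCD dBC dDA by simp
  have k: "pB* qA = pA* qD"
    by (rule key[OF _ _ _ _ _ _ _ _ eq]) (use iA iB iC iD qB qC pC pD in auto)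
  have ppos: "pA>0" "pB>0" "qA>0" "qD>0" using iA iB iD by auto
  define x where "x = log a pA"
  define y where "y = log a qA"
  define l where "l = log a pB - log a pA"
  have a0: "a>0" "a \<noteq> 1" using a by auto
  have xl: "x + l = log a pB" unfolding x_def l_def by simp
  have yl: "y + l = log a qD"
  proof -
    have "log a (pB* qA) = log a (pA* qD)" using k by simp
    hence "log a pB + log a qA = log a pA + log a qD" using ppos a0 by (simp add: log_mult)
    thus ?thesis unfolding y_def l_def by simp
  qed
  have pw: "\<And>z. z>0 \<Longrightarrow> a powr (log a z) = z" using a0 by simp
  have "x + y > 0"
  proof -
    have "x + y = log a (pA* qA)" unfolding x_def y_def using ppos a0 by (simp add: log_mult)
    moreover have "pA* qA > 1" using iA by simp
    ultimately show ?thesis using a ppos by simp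
  qed
  moreover have "l > 0" unfolding l_def using pBA a ppos by simp
  moreover have "T a x y = A" unfolding T_G[OF a0(1)] x_def y_def
    using pw ppos iA A by simp
  moreover have "T a (x+l) y = B" unfolding T_G[OF a0(1)] xl y_def
    using pw ppos iB qB B by simp
  moreover have "T a (x+l) (y+l) = C" unfolding T_G[OF a0(1)] xl yl
    using pw ppos iC qC pC C by simp
  moreover have "T a x (y+l) = D" unfolding T_G[OF a0(1)] x_def yl
    using pw ppos iD pD D by simp
  ultimately show ?thesis by blast
qed

end
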